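(* Let $X$ be a finite or countably infinite set and $\mathcal{S}=\langle x_1,\dots,x_n\rangle\in X^n$ a sample. For any constant $C>1$ and probability distributions $q,q'$ on $X$ such that $\frac1C q(x)\le q'(x)\le Cq(x)$ for all $x\in X$, the distinguisher $f:X\to[0,1]$ defined by $$f(x)=\frac{1}{2\log C}\log\frac{Cq(x)}{q'(x)}$$ has training advantage (relative to $q$ and $\mathcal{S}$) $$\hat\alpha(f)\ge\frac{\hat{L}(q;\mathcal{S})-\hat{L}(q';\mathcal{S})}{2\log C}.$$
   Context: The log-loss of a distribution $q$ on the sample is $\hat{L}(q;\mathcal{S})=-\frac{1}{n}\sum_{i=1}^n\log q(x_i)$. The empirical expectation is $\hat{\mathrm{E}}_{\mathcal{S}}[h(x)]=\frac1n\sum_{i=1}^n h(x_i)$. The training advantage of $f:X\to[0,1]$ relative to $q$ and $\mathcal{S}$ is $\hat\alpha(f)=\mathrm{E}_{x\sim q}[f(x)]-\hat{\mathrm{E}}_{\mathcal{S}}[f(x)]$. *)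

theory Defs
  imports "HOL-Probability.Probability"
begin

definition emp_exp :: "'a list \<Rightarrow> ('a \<Rightarrow> real) \<Rightarrow> real" where
  "emp_exp S h = (\<Sum>i<length S. h (S ! i)) / real (length S)"

definition log_loss :: "'a pmf \<Rightarrow> 'a list \<Rightarrow> real" where
  "log_loss q S = - (\<Sum>i<length S. ln (pmf q (S ! i))) / real (length S)"

definition train_adv :: "'a pmf \<Rightarrow> 'a list \<Rightarrow> ('a \<Rightarrow> real) \<Rightarrow> real" where
  "train_adv q S f = measure_pmf.expectation q f - emp_exp S f"

end

theory Submission
  imports Defs
begin

lemma Eh_le1:
  fixes q q' :: "'a pmf" and C :: real
  assumes "\<And>x. pmf q' x \<le> C * pmf q x" "C > 0"
  shows "measure_pmf.expectation q (\<lambda>x. pmf q' x / pmf q x) \<le> 1"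
proof -
  let ?h = "\<lambda>x. pmf q' x / pmf q x"
  have hb: "\<bar>?h x\<bar> \<le> C" for x
  proof (cases "pmf q x = 0")
    case False
    then have "pmf q x > 0" using pmf_nonneg[of q x] by linarith
    then show ?thesis using assms(1)[of x] by (simp add: divide_le_eq abs_le_iff)
  qed (use assms in auto)
  have int: "integrable q ?h"
    by (rule measure_pmf.integrable_const_bound[where B=C]) (use hb in auto)
  have "(\<integral>\<^sup>+ x. ennreal (?h x) \<partial>measure_pmf q)
      = \<integral>\<^sup>+ x. ennreal (pmf q x) * ennreal (?h x) \<partial>count_space UNIV"
    by (rule nn_integral_measure_pmf)
  also have "\<dots> \<le> \<integral>\<^sup>+ x. ennreal (pmf q' x) \<partial>count_space UNIV"
  proof (rule nn_integral_mono)
    fix x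
    show "ennreal (pmf q x) * ennreal (?h x) \<le> ennreal (pmf q' x)"
    proof (cases "pmf q x = 0")
      case True then show ?thesis by simp
    next
      case False
      then have "pmf q x > 0" using pmf_nonneg[of q x] by linarith
      then show ?thesis by (simp add: ennreal_mult''[symmetric])
    qed
  qed
  also have "\<dots> = 1" by (simp add: nn_integral_pmf measure_pmf.emeasure_space_1)
  finally have le: "(\<integral>\<^sup>+ x. ennreal (?h x) \<partial>measure_pmf q) \<le> 1" .
  have "measure_pmf.expectation q ?h = enn2real (\<integral>\<^sup>+ x. ennreal (?h x) \<partial>measure_pmf q)"
    by (rule integral_eq_nn_integral) auto
  also have "\<dots> \<le> 1" using le
    by (metis enn2real_1 enn2real_mono ennreal_one_neq_top top.not_eq_extremum)
  finally show ?thesis .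
qed

theorem lemma2:
  fixes q q' :: "'a::countable pmf" and S :: "'a list" and C :: real
  assumes "C > 1"
    and "\<And>x. pmf q x / C \<le> pmf q' x"
    and "\<And>x. pmf q' x \<le> C * pmf q x"
  defines "f \<equiv> (\<lambda>x. ln (C * pmf q x / pmf q' x) / (2 * ln C))"
  shows "(\<forall>x. f x \<in> {0..1}) \<and>
         train_adv q S f \<ge> (log_loss q S - log_loss q' S) / (2 * ln C)"
proof -
  have lnC: "ln C > 0" using assms(1) by simp
  have pos: "pmf q x > 0 \<Longrightarrow> pmf q' x > 0" for x
    using assms(2)[of x] assms(1) by (smt (verit) divide_pos_pos)
  have zero: "pmf q x = 0 \<Longrightarrow> pmf q' x = 0" for x
    using assms(3)[of x] pmf_nonneg[of q' x] by simp
  have fpos: "pmf q x > 0 \<Longrightarrow> f x = 1/2 + (ln (pmf q x) - ln (pmf q' x)) / (2 * ln C)" for x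
    using pos[of x] assms(1) lnC by (simp add: f_def ln_div ln_mult field_simps)
  have f01: "f x \<in> {0..1}" for x
  proof (cases "pmf q x = 0")
    case True then show ?thesis by (simp add: f_def zero)
  next
    case False
    then have p: "pmf q x > 0" using pmf_nonneg[of q x] by linarith
    have p': "pmf q' x > 0" using pos[OF p] .
    have r1: "C * pmf q x / pmf q' x \<ge> 1" using assms(3)[of x] p' by simp
    have r2: "C * pmf q x / pmf q' x \<le> C * C" using assms(2)[of x] p' assms(1)
      by (simp add: divide_le_eq field_simps)
    have "ln (C * pmf q x / pmf q' x) \<ge> 0" using r1 by simp
    moreover have "ln (C * pmf q x / pmf q' x) \<le> ln (C * C)"
      using r1 r2 by (subst ln_le_cancel_iff) auto
    moreover have "ln (C*C) = 2 * ln C" using assms(1) by (simp add: ln_mult)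
    ultimately show ?thesis using lnC by (simp add: f_def divide_le_eq)
  qed
  have fup: "f x \<le> 1/2 + (ln (pmf q x) - ln (pmf q' x)) / (2 * ln C)" for x
  proof (cases "pmf q x = 0")
    case True then show ?thesis using lnC by (simp add: f_def zero)
  next
    case False
    then show ?thesis using fpos pmf_nonneg[of q x] by force
  qed
  let ?h = "\<lambda>x. pmf q' x / pmf q x"
  have hb: "\<bar>?h x\<bar> \<le> C" for x
  proof (cases "pmf q x = 0")
    case False
    then have "pmf q x > 0" using pmf_nonneg[of q x] by linarith
    then show ?thesis using assms(3)[of x] by (simp add: divide_le_eq abs_le_iff)
  qed (use assms in auto)
  have Eh: "measure_pmf.expectation q ?h \<le> 1"
    using Eh_le1[of q' C q] assms by auto
  have inth: "integrable q ?h"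
    by (rule measure_pmf.integrable_const_bound[where B=C]) (use hb in auto)
  have intf: "integrable q f"
    by (rule measure_pmf.integrable_const_bound[where B=1]) (use f01 in auto)
  have lower: "AE x in q. 1/2 + (1 - ?h x) / (2 * ln C) \<le> f x"
    using AE_measure_pmf[of q]
  proof (rule AE_mp, intro AE_I2 impI)
    fix x assume "x \<in> set_pmf q"
    then have p: "pmf q x > 0" by (simp add: pmf_positive)
    have p': "pmf q' x > 0" using pos[OF p] .
    have "ln (?h x) \<le> ?h x - 1" using p p' by (intro ln_le_minus_one) simp
    moreover have "ln (?h x) = ln (pmf q' x) - ln (pmf q x)" using p p' by (simp add: ln_div)
    ultimately have "1 - ?h x \<le> ln (pmf q x) - ln (pmf q' x)" by simp
    then show "1/2 + (1 - ?h x) / (2 * ln C) \<le> f x" using fpos[OF p] lnC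
      by (simp add: divide_right_mono)
  qed
  have "measure_pmf.expectation q (\<lambda>x. 1/2 + (1 - ?h x) / (2 * ln C)) \<le> measure_pmf.expectation q f"
    by (rule integral_mono_AE) (use inth intf lower in auto)
  moreover have "measure_pmf.expectation q (\<lambda>x. 1/2 + (1 - ?h x) / (2 * ln C))
      = 1/2 + (1 - measure_pmf.expectation q ?h) / (2 * ln C)"
  proof -
    have eq: "(\<lambda>x. 1/2 + (1 - ?h x) / (2 * ln C)) = (\<lambda>x. (1/2 + 1/(2 * ln C)) - ?h x * (1/(2 * ln C)))"
      by (auto simp: diff_divide_distrib)
    have "measure_pmf.expectation q (\<lambda>x. (1/2 + 1/(2 * ln C)) - ?h x * (1/(2 * ln C)))
        = (1/2 + 1/(2 * ln C)) - measure_pmf.expectation q ?h * (1/(2 * ln C))"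
    proof -
      have i2: "integrable q (\<lambda>x. ?h x * (1/(2 * ln C)))" using inth by (simp only: integrable_mult_right_iff) simp
      have "measure_pmf.expectation q (\<lambda>x. (1/2 + 1/(2 * ln C)) - ?h x * (1/(2 * ln C)))
         = measure_pmf.expectation q (\<lambda>x. (1/2 + 1/(2 * ln C))) - measure_pmf.expectation q (\<lambda>x. ?h x * (1/(2 * ln C)))"
        by (rule Bochner_Integration.integral_diff[OF _ i2]) simp
      also have "\<dots> = (1/2 + 1/(2 * ln C)) - measure_pmf.expectation q ?h * (1/(2 * ln C))"
        by (simp only: integral_mult_left_zero) (simp add: measure_pmf.prob_space)
      finally show ?thesis .
    qed
    then show ?thesis unfolding eq by (simp add: diff_divide_distrib)
  qed
  moreover have "(1 - measure_pmf.expectation q ?h) / (2 * ln C) \<ge> 0" using Eh lnC by simp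
  ultimately have Ef: "measure_pmf.expectation q f \<ge> 1/2" by linarith
  have main: "train_adv q S f \<ge> (log_loss q S - log_loss q' S) / (2 * ln C)"
  proof (cases "S = []")
    case True
    then show ?thesis using Ef by (simp add: train_adv_def emp_exp_def log_loss_def)
  next
    case False
    define n where "n = real (length S)"
    have n: "n > 0" using False by (simp add: n_def)
    define A where "A = (\<Sum>i<length S. ln (pmf q (S ! i)))"
    define B where "B = (\<Sum>i<length S. ln (pmf q' (S ! i)))"
    have "(\<Sum>i<length S. f (S ! i)) \<le> (\<Sum>i<length S. 1/2 + (ln (pmf q (S ! i)) - ln (pmf q' (S ! i))) / (2 * ln C))"
      by (rule sum_mono) (rule fup)
    also have "\<dots> = n / 2 + (A - B) / (2 * ln C)"
      by (simp add: sum.distrib sum_divide_distrib[symmetric] sum_subtractf A_def B_def n_def)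
    finally have s: "(\<Sum>i<length S. f (S ! i)) \<le> n / 2 + (A - B) / (2 * ln C)" .
    have e: "emp_exp S f \<le> 1/2 + (A - B) / (n * (2 * ln C))"
    proof -
      have "emp_exp S f = (\<Sum>i<length S. f (S ! i)) / n" by (simp add: emp_exp_def n_def)
      also have "\<dots> \<le> (n / 2 + (A - B) / (2 * ln C)) / n" using divide_right_mono[OF s, of n] n by simp
      also have "\<dots> = 1/2 + (A - B) / (n * (2 * ln C))" using n lnC by (simp add: field_simps)
      finally show ?thesis .
    qed
    have "(log_loss q S - log_loss q' S) / (2 * ln C) = (B - A) / (n * (2 * ln C))"
      using n lnC by (simp add: log_loss_def A_def[symmetric] B_def[symmetric] n_def[symmetric] field_simps)
    also have "\<dots> \<le> train_adv q S f"
    proof -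
      have "(B - A) / (n * (2 * ln C)) = - ((A - B) / (n * (2 * ln C)))" by (metis minus_diff_eq minus_divide_left)
      then show ?thesis using e Ef unfolding train_adv_def by linarith
    qed
    finally show ?thesis .
  qed
  show ?thesis using f01 main by blast
qed

end
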